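(* Let $p\ge2$, $\mathcal K>0$ and $b(\xi)=\mathcal K|\xi|^{p-2}\xi$ on $\mathbb{R}^{Nn}$. Then for all $\xi,\xi_o,G\in\mathbb{R}^{Nn}$ and every invertible $\Psi\in\mathbb{R}^{n\times n}$, $$\big|b(\xi\Psi)-b(\xi_o\Psi)-\big[b((\xi+G)\Psi)-b((\xi_o+G)\Psi)\big]\big|\le c\,|G|\big(|\xi_o|^2+|\xi-\xi_o|^2+|G|^2\big)^{\frac{p-3}2}|\xi-\xi_o|$$ with a constant $c=c(p,\mathcal K,|\Psi|,|\Psi^{-1}|)$. *)

theory Defs
  imports Complex_Main
begin

text \<open>Real N x n matrices (elements of R^{Nn}) represented as functions
  nat \<Rightarrow> nat \<Rightarrow> real; only the entries with row index < N and column
  index < n are meaningful.  This lets the dimensions N, n be quantified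
  inside the statement, so that the constant can be independent of them.\<close>

type_synonym mat = "nat \<Rightarrow> nat \<Rightarrow> real"

definition fnorm :: "nat \<Rightarrow> nat \<Rightarrow> mat \<Rightarrow> real" where
  "fnorm N n A = sqrt (\<Sum>i<N. \<Sum>j<n. (A i j)\<^sup>2)"

definition mmul :: "nat \<Rightarrow> mat \<Rightarrow> mat \<Rightarrow> mat" where
  "mmul n A B = (\<lambda>i j. \<Sum>k<n. A i k * B k j)"

definition is_inverse :: "nat \<Rightarrow> mat \<Rightarrow> mat \<Rightarrow> bool" where
  "is_inverse n Psi Phi \<longleftrightarrow>
     (\<forall>i<n. \<forall>j<n. mmul n Psi Phi i j = (if i = j then 1 else 0)
                 \<and> mmul n Phi Psi i j = (if i = j then 1 else 0))"

definition madd :: "mat \<Rightarrow> mat \<Rightarrow> mat" where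
  "madd A B = (\<lambda>i j. A i j + B i j)"

definition msub :: "mat \<Rightarrow> mat \<Rightarrow> mat" where
  "msub A B = (\<lambda>i j. A i j - B i j)"

definition bfield :: "real \<Rightarrow> real \<Rightarrow> nat \<Rightarrow> nat \<Rightarrow> mat \<Rightarrow> mat" where
  "bfield p K N n \<xi> = (\<lambda>i j. K * fnorm N n \<xi> powr (p - 2) * \<xi> i j)"

end

theory Submission
  imports Defs "HOL-Analysis.Analysis"
begin


typedef fv = "{f :: nat \<times> nat \<Rightarrow> real. finite {k. f k \<noteq> 0}}"
  morphisms vec Abs_fv
  by (rule exI[of _ "\<lambda>_. 0"]) simp

setup_lifting type_definition_fv

lemma fin_supp: "finite {k. vec f k \<noteq> 0}"
  using vec[of f] by simp

lemma fv_eq: "f = g \<longleftrightarrow> (\<forall>k. vec f k = vec g k)"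
  by (metis vec_inject ext)

instantiation fv :: real_vector
begin
lift_definition zero_fv :: fv is "\<lambda>_. 0" by simp
lift_definition plus_fv :: "fv \<Rightarrow> fv \<Rightarrow> fv" is "\<lambda>f g k. f k + g k"
proof -
  fix f g :: "nat\<times>nat \<Rightarrow> real" assume "finite {k. f k \<noteq> 0}" "finite {k. g k \<noteq> 0}"
  then show "finite {k. f k + g k \<noteq> 0}" by (rule finite_subset[rotated, OF finite_UnI]) auto
qed
lift_definition minus_fv :: "fv \<Rightarrow> fv \<Rightarrow> fv" is "\<lambda>f g k. f k - g k"
proof -
  fix f g :: "nat\<times>nat \<Rightarrow> real" assume "finite {k. f k \<noteq> 0}" "finite {k. g k \<noteq> 0}"
  then show "finite {k. f k - g k \<noteq> 0}" by (rule finite_subset[rotated, OF finite_UnI]) auto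
qed
lift_definition uminus_fv :: "fv \<Rightarrow> fv" is "\<lambda>f k. - f k" by simp
lift_definition scaleR_fv :: "real \<Rightarrow> fv \<Rightarrow> fv" is "\<lambda>r f k. r * f k"
proof -
  fix r and f :: "nat\<times>nat \<Rightarrow> real" assume "finite {k. f k \<noteq> 0}"
  then show "finite {k. r * f k \<noteq> 0}" by (rule finite_subset[rotated]) auto
qed
instance
  by standard (simp_all add: fv_eq zero_fv.rep_eq plus_fv.rep_eq minus_fv.rep_eq
      uminus_fv.rep_eq scaleR_fv.rep_eq algebra_simps)
end

definition supp :: "fv \<Rightarrow> (nat\<times>nat) set" where "supp f = {k. vec f k \<noteq> 0}"

lemma inner_expand:
  assumes "finite A" "supp f \<subseteq> A"
  shows "(\<Sum>k\<in>supp f. vec f k * vec g k) = (\<Sum>k\<in>A. vec f k * vec g k)"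
  by (rule sum.mono_neutral_left) (use assms in \<open>auto simp: supp_def\<close>)

lemma supp_fin: "finite (supp f)" by (simp add: supp_def fin_supp)

instantiation fv :: real_inner
begin
definition inner_fv :: "fv \<Rightarrow> fv \<Rightarrow> real" where
  "inner_fv f g = (\<Sum>k\<in>supp f. vec f k * vec g k)"
definition norm_fv :: "fv \<Rightarrow> real" where "norm_fv f = sqrt (inner f f)"
definition sgn_fv :: "fv \<Rightarrow> fv" where "sgn_fv f = f /\<^sub>R norm f"
definition dist_fv :: "fv \<Rightarrow> fv \<Rightarrow> real" where "dist_fv f g = norm (f - g)"
definition uniformity_fv :: "(fv \<times> fv) filter" where
  "uniformity_fv = (INF e\<in>{0<..}. principal {(x, y). dist x y < e})"
definition open_fv :: "fv set \<Rightarrow> bool" where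
  "open_fv U = (\<forall>x\<in>U. \<forall>\<^sub>F (x', y) in uniformity. x' = x \<longrightarrow> y \<in> U)"

lemma inner_fv_alt: "finite A \<Longrightarrow> supp f \<union> supp g \<subseteq> A \<Longrightarrow> inner f g = (\<Sum>k\<in>A. vec f k * vec g k)"
  unfolding inner_fv_def by (rule inner_expand) auto

instance
proof
  fix x y z :: fv and r :: real
  let ?A = "supp x \<union> supp y"
  have fA: "finite ?A" by (simp add: supp_fin)
  show "inner x y = inner y x"
    using inner_fv_alt[OF fA, of x y] inner_fv_alt[OF fA, of y x] by (auto simp: mult.commute)
  let ?B = "supp x \<union> supp y \<union> supp z"
  have fB: "finite ?B" by (simp add: supp_fin)
  have sxy: "supp (x + y) \<subseteq> ?B" by (auto simp: supp_def plus_fv.rep_eq)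
  show "inner (x + y) z = inner x z + inner y z"
  proof -
    have "supp x \<union> supp z \<subseteq> ?B" "supp y \<union> supp z \<subseteq> ?B" "supp (x+y) \<union> supp z \<subseteq> ?B"
      using sxy by auto
    then show ?thesis
      using inner_fv_alt[OF fB, of "x+y" z] inner_fv_alt[OF fB, of x z] inner_fv_alt[OF fB, of y z]
      by (simp add: plus_fv.rep_eq distrib_right sum.distrib)
  qed
  have "supp (r *\<^sub>R x) \<subseteq> supp x" by (auto simp: supp_def scaleR_fv.rep_eq)
  then show "inner (r *\<^sub>R x) y = r * inner x y"
    using inner_fv_alt[OF fA, of "r *\<^sub>R x" y] inner_fv_alt[OF fA, of x y]
    by (auto simp: scaleR_fv.rep_eq sum_distrib_left mult.assoc)
  show "0 \<le> inner x x" by (simp add: inner_fv_def sum_nonneg)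
  show "inner x x = 0 \<longleftrightarrow> x = 0"
  proof
    assume "inner x x = 0"
    then have "\<forall>k\<in>supp x. vec x k * vec x k = 0"
      using sum_nonneg_eq_0_iff[OF supp_fin[of x], of "\<lambda>k. vec x k * vec x k"] by (simp add: inner_fv_def)
    then show "x = 0" by (auto simp: fv_eq zero_fv.rep_eq supp_def)
  qed (simp add: inner_fv_def supp_def zero_fv.rep_eq)
  show "norm x = sqrt (inner x x)" by (simp add: norm_fv_def)
qed (simp_all add: sgn_fv_def dist_fv_def uniformity_fv_def open_fv_def)
end



definition FF :: "real \<Rightarrow> 'a::real_inner \<Rightarrow> 'a" where
  "FF q y = (norm y powr q) *\<^sub>R y"

lemma pow2_powr: "(z::real) > 0 \<Longrightarrow> (z\<^sup>2) powr c = z powr (2*c)"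
proof -
  assume z: "z > 0"
  have "z\<^sup>2 = z powr 2" using z by simp
  then show ?thesis by (simp add: powr_powr)
qed

lemma powr_m1: "(x::real) > 0 \<Longrightarrow> x powr (c - 1) * x = x powr c"
  by (simp add: powr_diff)

lemma scalar_ineq:
  fixes \<alpha> \<beta> q :: real
  assumes "0 < \<beta>" "\<beta> \<le> \<alpha>" "q \<ge> 0"
  shows "(\<alpha> powr q - \<beta> powr q) * \<beta> \<le> q * \<alpha> powr q * (\<alpha> - \<beta>)"
proof (cases "\<beta> = \<alpha>")
  case True then show ?thesis by simp
next
  case False
  then have lt: "\<beta> < \<alpha>" using assms by simp
  have "\<And>z. \<beta> \<le> z \<Longrightarrow> z \<le> \<alpha> \<Longrightarrow> ((\<lambda>z. z powr q) has_real_derivative q * z powr (q - 1)) (at z)"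
    using assms by (auto intro!: has_real_derivative_powr)
  from MVT2[OF lt this] obtain z where z: "\<beta> < z" "z < \<alpha>"
    "\<alpha> powr q - \<beta> powr q = (\<alpha> - \<beta>) * (q * z powr (q - 1))" by blast
  have key: "z powr (q - 1) * \<beta> \<le> \<alpha> powr q"
  proof (cases "q \<ge> 1")
    case True
    have "z powr (q - 1) \<le> \<alpha> powr (q - 1)" using z assms True by (intro powr_mono2) auto
    then have "z powr (q - 1) * \<beta> \<le> \<alpha> powr (q - 1) * \<alpha>"
      using assms by (intro mult_mono) auto
    also have "\<dots> = \<alpha> powr q" using assms by (simp add: powr_m1)
    finally show ?thesis .
  next
    case False
    have "z powr (q - 1) \<le> \<beta> powr (q - 1)" using z assms False by (intro powr_mono2') auto
    then have "z powr (q - 1) * \<beta> \<le> \<beta> powr (q - 1) * \<beta>"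
      using assms by (intro mult_right_mono) auto
    also have "\<dots> = \<beta> powr q" using assms by (simp add: powr_m1)
    also have "\<dots> \<le> \<alpha> powr q" using assms by (intro powr_mono2) auto
    finally show ?thesis .
  qed
  have "(\<alpha> powr q - \<beta> powr q) * \<beta> = (\<alpha> - \<beta>) * q * (z powr (q - 1) * \<beta>)"
    using z(3) by simp
  also have "\<dots> \<le> (\<alpha> - \<beta>) * q * \<alpha> powr q"
    using key lt assms by (intro mult_left_mono) auto
  finally show ?thesis by (simp only: mult_ac)
qed

lemma first_diff:
  fixes a b :: "'a::real_inner"
  assumes q: "q \<ge> 0"
  shows "norm (FF q a - FF q b) \<le> (1 + q) * max (norm a) (norm b) powr q * norm (a - b)"
proof -
  have main: "norm (FF q a - FF q b) \<le> (1 + q) * norm a powr q * norm (a - b)"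
    if ba: "norm b \<le> norm a" for a b :: 'a
  proof -
    have eq: "FF q a - FF q b = (norm a powr q) *\<^sub>R (a - b) + (norm a powr q - norm b powr q) *\<^sub>R b"
      by (simp add: FF_def algebra_simps)
    have mono: "norm b powr q \<le> norm a powr q" using ba q by (intro powr_mono2) auto
    have "norm (FF q a - FF q b) \<le> norm ((norm a powr q) *\<^sub>R (a - b)) + norm ((norm a powr q - norm b powr q) *\<^sub>R b)"
      unfolding eq by (rule norm_triangle_ineq)
    also have "\<dots> = norm a powr q * norm (a - b) + (norm a powr q - norm b powr q) * norm b"
      using mono by simp
    also have "(norm a powr q - norm b powr q) * norm b \<le> q * norm a powr q * norm (a - b)"
    proof (cases "norm b = 0")
      case True then show ?thesis using q by simp
    next
      case False
      then have "(norm a powr q - norm b powr q) * norm b \<le> q * norm a powr q * (norm a - norm b)"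
        using ba q by (intro scalar_ineq) auto
      also have "\<dots> \<le> q * norm a powr q * norm (a - b)"
        using q by (intro mult_left_mono norm_triangle_ineq2) auto
      finally show ?thesis .
    qed
    finally show ?thesis by (simp add: distrib_right)
  qed
  show ?thesis
  proof (cases "norm b \<le> norm a")
    case True then show ?thesis using main[OF True] by (simp add: max_def)
  next
    case False
    then have "norm (FF q b - FF q a) \<le> (1 + q) * norm b powr q * norm (b - a)" using main by simp
    then show ?thesis using False by (simp add: max_def norm_minus_commute)
  qed
qed



lemma abs3: "\<bar>a\<bar> \<le> A \<Longrightarrow> \<bar>b\<bar> \<le> B \<Longrightarrow> \<bar>c\<bar> \<le> C \<Longrightarrow> \<bar>(a::real) * b * c\<bar> \<le> A * B * C"
  by (simp add: abs_mult mult_mono' abs_ge_zero order_trans[OF abs_ge_zero])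

lemma abs2: "\<bar>a\<bar> \<le> A \<Longrightarrow> \<bar>b\<bar> \<le> B \<Longrightarrow> \<bar>(a::real) * b\<bar> \<le> A * B"
  by (simp add: abs_mult mult_mono' order_trans[OF abs_ge_zero])

lemma abs_scale: "0 \<le> (c::real) \<Longrightarrow> \<bar>X\<bar> \<le> B \<Longrightarrow> \<bar>c*X\<bar> \<le> c*B"
  by (simp add: abs_mult mult_left_mono)

lemma ust_bound:
  fixes ny nh ng ne Yh Yg L hg ge he r :: real
  assumes ny: "ny > 0" and b1: "\<bar>Yh\<bar> \<le> ny*nh" and b2: "\<bar>Yg\<bar> \<le> ny*ng" and b3: "\<bar>L\<bar> \<le> ny*ne"
    and b4: "\<bar>hg\<bar> \<le> nh*ng" and b5: "\<bar>ge\<bar> \<le> ng*ne" and b6: "\<bar>he\<bar> \<le> nh*ne"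
    and r: "r \<ge> 0"
  shows "\<bar>(r-1) * (ny\<^sup>2) powr (r-2) * (2*Yg) * (r*(2*Yh)*L) + (ny\<^sup>2) powr (r-1) * (r*(2*hg*L + 2*Yh*ge))
          + (r * (ny\<^sup>2) powr (r-1) * (2*Yg) * he + (ny\<^sup>2) powr r * 0)\<bar>
         \<le> (4*r*\<bar>r-1\<bar> + 6*r) * ny powr (2*r-1) * nh*ng*ne"
proof -
  define A where "A = ny powr (2*r-4)"
  have A: "A > 0" using ny by (simp add: A_def)
  have e1: "(ny\<^sup>2) powr (r-2) = A" using ny by (simp add: pow2_powr A_def algebra_simps)
  have e2: "(ny\<^sup>2) powr (r-1) = A * ny\<^sup>2"
  proof -
    have "(ny\<^sup>2) powr (r-1) = ny powr ((2*r-4) + 2)" using ny by (simp add: pow2_powr algebra_simps)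
    also have "\<dots> = A * ny\<^sup>2" unfolding powr_add A_def using ny by simp
    finally show ?thesis .
  qed
  have e3: "ny powr (2*r-1) = A * ny^3"
  proof -
    have "ny powr (2*r-1) = ny powr ((2*r-4) + 3)" by (simp add: algebra_simps)
    also have "\<dots> = A * ny^3" unfolding powr_add A_def using ny by simp
    finally show ?thesis .
  qed
  have Yg: "\<bar>Yg * Yh * L\<bar> \<le> (ny*ng) * (ny*nh) * (ny*ne)" by (rule abs3[OF b2 b1 b3])
  have T: "\<bar>hg*L + Yh*ge\<bar> \<le> 2*(ny*nh*ng*ne)"
  proof -
    have "\<bar>hg*L\<bar> \<le> (nh*ng)*(ny*ne)" by (rule abs2[OF b4 b3])
    moreover have "\<bar>Yh*ge\<bar> \<le> (ny*nh)*(ng*ne)" by (rule abs2[OF b1 b5])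
    ultimately show ?thesis by (simp add: mult_ac)
  qed
  have H: "\<bar>Yg*he\<bar> \<le> (ny*ng)*(nh*ne)" by (rule abs2[OF b2 b6])
  have q1: "(r-1) * (ny\<^sup>2) powr (r-2) * (2*Yg) * (r*(2*Yh)*L) = (4*r*(r-1)*A) * (Yg*Yh*L)"
    using e1 by simp
  have q2: "(ny\<^sup>2) powr (r-1) * (r*(2*hg*L + 2*Yh*ge)) = (2*r*A*ny\<^sup>2) * (hg*L + Yh*ge)"
    using e2 by (simp add: algebra_simps)
  have q3: "r * (ny\<^sup>2) powr (r-1) * (2*Yg) * he + (ny\<^sup>2) powr r * 0 = (2*r*A*ny\<^sup>2) * (Yg*he)"
    using e2 by (simp add: algebra_simps)
  have c1: "\<bar>(4*r*(r-1)*A) * (Yg*Yh*L)\<bar> \<le> (4*r*\<bar>r-1\<bar>*A) * ((ny*ng) * (ny*nh) * (ny*ne))"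
    using Yg A r by (simp add: abs_mult mult_left_mono)
  have c2: "\<bar>(2*r*A*ny\<^sup>2) * (hg*L + Yh*ge)\<bar> \<le> (2*r*A*ny\<^sup>2) * (2*(ny*nh*ng*ne))"
    using T A r by (intro abs_scale) auto
  have c3: "\<bar>(2*r*A*ny\<^sup>2) * (Yg*he)\<bar> \<le> (2*r*A*ny\<^sup>2) * ((ny*ng)*(nh*ne))"
    using H A r by (intro abs_scale) auto
  have tri: "\<bar>a+b+c\<bar> \<le> \<bar>a\<bar>+\<bar>b\<bar>+\<bar>c\<bar>" for a b c :: real by arith
  have "\<bar>(r-1) * (ny\<^sup>2) powr (r-2) * (2*Yg) * (r*(2*Yh)*L) + (ny\<^sup>2) powr (r-1) * (r*(2*hg*L + 2*Yh*ge))
          + (r * (ny\<^sup>2) powr (r-1) * (2*Yg) * he + (ny\<^sup>2) powr r * 0)\<bar>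
      \<le> (4*r*\<bar>r-1\<bar>*A) * ((ny*ng) * (ny*nh) * (ny*ne)) + (2*r*A*ny\<^sup>2) * (2*(ny*nh*ng*ne)) + (2*r*A*ny\<^sup>2) * ((ny*ng)*(nh*ne))"
    unfolding q1 q2 q3 using tri[of "(4*r*(r-1)*A) * (Yg*Yh*L)" "(2*r*A*ny\<^sup>2) * (hg*L + Yh*ge)" "(2*r*A*ny\<^sup>2) * (Yg*he)"] c1 c2 c3
    by linarith
  also have "\<dots> = (4*r*\<bar>r-1\<bar> + 6*r) * (A * ny^3) * nh*ng*ne"
    by (simp add: algebra_simps power2_eq_square power3_eq_cube)
  finally show ?thesis using e3 by simp
qed



lemma deriv_pl:
  assumes f: "(f has_real_derivative f') (at x)" and pos: "f x > 0"
    and l: "(l has_real_derivative l') (at x)"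
  shows "((\<lambda>x. f x powr r * l x) has_real_derivative (r * f x powr (r-1) * f' * l x + f x powr r * l')) (at x)"
proof -
  have "((\<lambda>x. f x powr r) has_real_derivative r * f x powr (r - 1) * f') (at x)"
    using DERIV_chain2[OF has_real_derivative_powr[OF pos] f] by simp
  from DERIV_mult[OF this l] show ?thesis by (simp add: mult.commute)
qed

lemma far_case:
  fixes x h g e :: "'a::real_inner"
  assumes q: "q \<ge> 0"
    and pos: "\<And>a b. 0 \<le> a \<Longrightarrow> a \<le> 1 \<Longrightarrow> 0 \<le> b \<Longrightarrow> b \<le> 1 \<Longrightarrow> norm (x + a *\<^sub>R h + b *\<^sub>R g) > 0"
  shows "\<exists>a b. 0 \<le> a \<and> a \<le> 1 \<and> 0 \<le> b \<and> b \<le> 1 \<and>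
    inner (FF q (x+h+g) - FF q (x+h) - FF q (x+g) + FF q x) e
      \<le> (2*q*\<bar>q/2-1\<bar> + 3*q) * norm (x + a *\<^sub>R h + b *\<^sub>R g) powr (q-1) * norm h * norm g * norm e"
proof -
  define r where "r = q/2"
  define y where "y a b = x + a *\<^sub>R h + b *\<^sub>R g" for a b
  define P where "P a b = inner x x + 2*a*inner x h + 2*b*inner x g + a\<^sup>2*inner h h + 2*a*b*inner h g + b\<^sup>2*inner g g" for a b
  define Yh where "Yh a b = inner x h + a*inner h h + b*inner h g" for a b
  define Yg where "Yg a b = inner x g + a*inner h g + b*inner g g" for a b
  define L where "L a b = inner x e + a*inner h e + b*inner g e" for a b
  have Py: "inner (y a b) (y a b) = P a b" for a b
    by (simp add: y_def P_def inner_add_left inner_add_right inner_commute power2_eq_square algebra_simps)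
  have Yhy: "inner (y a b) h = Yh a b" for a b
    by (simp add: y_def Yh_def inner_add_left inner_add_right inner_commute algebra_simps)
  have Ygy: "inner (y a b) g = Yg a b" for a b
    by (simp add: y_def Yg_def inner_add_left inner_add_right inner_commute algebra_simps)
  have Ly: "inner (y a b) e = L a b" for a b
    by (simp add: y_def L_def inner_add_left inner_add_right inner_commute algebra_simps)
  have Pn: "P a b = (norm (y a b))\<^sup>2" for a b
    using Py[of a b] by (simp add: power2_norm_eq_inner)
  have Ppos: "P a b > 0" if "0 \<le> a" "a \<le> 1" "0 \<le> b" "b \<le> 1" for a b
    using pos[OF that] by (simp add: Pn y_def)
  have Fe: "inner (FF q (y a b)) e = P a b powr r * L a b" if "0 \<le> a" "a \<le> 1" "0 \<le> b" "b \<le> 1" for a b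
  proof -
    have n: "norm (y a b) > 0" using pos[OF that] by (simp add: y_def)
    have "norm (y a b) powr q = P a b powr r"
      using n by (simp add: Pn pow2_powr r_def)
    then show ?thesis by (simp add: FF_def Ly)
  qed
  define u where "u a b = P a b powr r * L a b" for a b
  define us where "us a b = r * P a b powr (r-1) * (2*Yh a b) * L a b + P a b powr r * inner h e" for a b
  define ust where "ust a b = (r-1) * P a b powr (r-2) * (2*Yg a b) * (r*(2*Yh a b)*L a b)
      + P a b powr (r-1) * (r*(2*inner h g*L a b + 2*Yh a b*inner g e))
      + (r * P a b powr (r-1) * (2*Yg a b) * inner h e + P a b powr r * 0)" for a b
  have dPa: "((\<lambda>a. P a b) has_real_derivative 2 * Yh a b) (at a)" for a b
    unfolding P_def Yh_def
    by (auto intro!: derivative_eq_intros simp: algebra_simps power2_eq_square)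
  have dPb: "((\<lambda>b. P a b) has_real_derivative 2 * Yg a b) (at b)" for a b
    unfolding P_def Yg_def
    by (auto intro!: derivative_eq_intros simp: algebra_simps power2_eq_square)
  have dLa: "((\<lambda>a. L a b) has_real_derivative inner h e) (at a)" for a b
    unfolding L_def by (auto intro!: derivative_eq_intros)
  have dl2: "((\<lambda>b. r*(2*Yh a b)*L a b) has_real_derivative r*(2*inner h g*L a b + 2*Yh a b*inner g e)) (at b)" for a b
    unfolding L_def Yh_def by (auto intro!: derivative_eq_intros simp: algebra_simps)
  have du: "((\<lambda>a. u a b) has_real_derivative us a b) (at a)"
    if "0 \<le> a" "a \<le> 1" "0 \<le> b" "b \<le> 1" for a b
    unfolding u_def us_def using deriv_pl[OF dPa Ppos[OF that] dLa, of r] by simp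
  have us_alt: "us a b = P a b powr (r-1) * (r*(2*Yh a b)*L a b) + P a b powr r * inner h e" for a b
    by (simp add: us_def)
  have dus: "((\<lambda>b. us a b) has_real_derivative ust a b) (at b)"
    if "0 \<le> a" "a \<le> 1" "0 \<le> b" "b \<le> 1" for a b
  proof -
    have c: "((\<lambda>b. inner h e) has_real_derivative 0) (at b)" by simp
    have "((\<lambda>b. P a b powr (r-1) * (r*(2*Yh a b)*L a b) + P a b powr r * inner h e) has_real_derivative ust a b) (at b)"
      unfolding ust_def
      using DERIV_add[OF deriv_pl[OF dPb Ppos[OF that] dl2, of "r-1"] deriv_pl[OF dPb Ppos[OF that] c, of r]]
      by (simp add: diff_diff_eq)
    then show ?thesis unfolding us_alt[abs_def] by simp
  qed
  have "\<And>a. 0 \<le> a \<Longrightarrow> a \<le> 1 \<Longrightarrow> ((\<lambda>a. u a 1 - u a 0) has_real_derivative us a 1 - us a 0) (at a)"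
    by (rule DERIV_diff) (auto intro!: du)
  from MVT2[of 0 1, OF _ this] obtain \<sigma> where \<sigma>: "0 < \<sigma>" "\<sigma> < 1"
    "u 1 1 - u 1 0 - (u 0 1 - u 0 0) = (1 - 0) * (us \<sigma> 1 - us \<sigma> 0)" by auto
  have "\<And>b. 0 \<le> b \<Longrightarrow> b \<le> 1 \<Longrightarrow> ((\<lambda>b. us \<sigma> b) has_real_derivative ust \<sigma> b) (at b)"
    using \<sigma> by (auto intro!: dus)
  from MVT2[of 0 1, OF _ this] obtain \<tau> where \<tau>: "0 < \<tau>" "\<tau> < 1"
    "us \<sigma> 1 - us \<sigma> 0 = (1 - 0) * ust \<sigma> \<tau>" by auto
  have De: "inner (FF q (x+h+g) - FF q (x+h) - FF q (x+g) + FF q x) e = u 1 1 - u 1 0 - (u 0 1 - u 0 0)"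
  proof -
    have "y 1 1 = x+h+g" "y 1 0 = x+h" "y 0 1 = x+g" "y 0 0 = x" by (simp_all add: y_def)
    then show ?thesis using Fe[of 1 1] Fe[of 1 0] Fe[of 0 1] Fe[of 0 0]
      by (simp add: inner_add_left inner_diff_left u_def)
  qed
  define ny where "ny = norm (y \<sigma> \<tau>)"
  have ny: "ny > 0" using pos[of \<sigma> \<tau>] \<sigma> \<tau> by (simp add: ny_def y_def)
  have P2: "P \<sigma> \<tau> = ny\<^sup>2" by (simp add: Pn ny_def)
  have B: "\<bar>ust \<sigma> \<tau>\<bar> \<le> (4*r*\<bar>r-1\<bar> + 6*r) * ny powr (2*r-1) * norm h * norm g * norm e"
    unfolding ust_def P2
  proof (rule ust_bound)
    show "0 < ny" by (rule ny)
    show "\<bar>Yh \<sigma> \<tau>\<bar> \<le> ny * norm h" unfolding Yhy[symmetric] ny_def by (rule Cauchy_Schwarz_ineq2)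
    show "\<bar>Yg \<sigma> \<tau>\<bar> \<le> ny * norm g" unfolding Ygy[symmetric] ny_def by (rule Cauchy_Schwarz_ineq2)
    show "\<bar>L \<sigma> \<tau>\<bar> \<le> ny * norm e" unfolding Ly[symmetric] ny_def by (rule Cauchy_Schwarz_ineq2)
    show "\<bar>inner h g\<bar> \<le> norm h * norm g" by (rule Cauchy_Schwarz_ineq2)
    show "\<bar>inner g e\<bar> \<le> norm g * norm e" by (rule Cauchy_Schwarz_ineq2)
    show "\<bar>inner h e\<bar> \<le> norm h * norm e" by (rule Cauchy_Schwarz_ineq2)
    show "0 \<le> r" using q by (simp add: r_def)
  qed
  have K: "4*r*\<bar>r-1\<bar> + 6*r = 2*q*\<bar>q/2-1\<bar> + 3*q" "2*r-1 = q-1" by (simp_all add: r_def)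
  show ?thesis
    apply (rule exI[of _ \<sigma>], rule exI[of _ \<tau>])
    using \<sigma> \<tau> De B K by (simp add: ny_def y_def)
qed



lemma FF0[simp]: "FF q 0 = 0" by (simp add: FF_def)

lemma fd:
  fixes a b :: "'a::real_inner"
  assumes "q \<ge> 0" "norm a \<le> S" "norm b \<le> S"
  shows "norm (FF q a - FF q b) \<le> (1+q) * S powr q * norm (a - b)"
proof -
  have "max (norm a) (norm b) powr q \<le> S powr q" using assms by (intro powr_mono2) (auto simp: le_max_iff_disj)
  then have "(1+q) * max (norm a) (norm b) powr q * norm (a - b) \<le> (1+q) * S powr q * norm (a - b)"
    using assms by (intro mult_right_mono mult_left_mono) auto
  with first_diff[OF assms(1), of a b] show ?thesis by linarith
qed

lemma lohi1: "(nA::real) \<le> H \<Longrightarrow> nB \<le> G \<Longrightarrow> X - nA - nB \<le> Y \<Longrightarrow> Y \<le> X + nA + nB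
   \<Longrightarrow> \<not> X \<le> 2*(H+G) \<Longrightarrow> 0 \<le> H \<Longrightarrow> 0 \<le> G \<Longrightarrow> Y > (X+H+G)/3"
  by argo

lemma lohi2: "(nA::real) \<le> H \<Longrightarrow> nB \<le> G \<Longrightarrow> X - nA - nB \<le> Y \<Longrightarrow> Y \<le> X + nA + nB
   \<Longrightarrow> \<not> X \<le> 2*(H+G) \<Longrightarrow> 0 \<le> H \<Longrightarrow> 0 \<le> G \<Longrightarrow> Y \<le> X+H+G"
  by linarith

definition K2 :: "real \<Rightarrow> real" where
  "K2 q = max (12*(1+q)) (3*(2*q*\<bar>q/2-1\<bar> + 3*q))"

lemma second_diff:
  fixes x h g :: "'a::real_inner"
  assumes q: "q \<ge> 0"
  shows "norm (FF q (x+h+g) - FF q (x+h) - FF q (x+g) + FF q x)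
    \<le> K2 q * norm h * norm g * (norm x + norm h + norm g) powr (q-1)"
proof -
  define S where "S = norm x + norm h + norm g"
  define D where "D = FF q (x+h+g) - FF q (x+h) - FF q (x+g) + FF q x"
  have K2: "12*(1+q) \<le> K2 q" "3*(2*q*\<bar>q/2-1\<bar> + 3*q) \<le> K2 q" by (simp_all add: K2_def)
  have nn: "0 \<le> norm h * norm g * S powr (q-1)" by simp
  show ?thesis
  proof (cases "S = 0")
    case True
    then have "x = 0" "h = 0" "g = 0" unfolding S_def
      by (smt (verit) norm_ge_zero norm_eq_zero)+
    then show ?thesis by simp
  next
    case False
    then have S: "S > 0" unfolding S_def using norm_ge_zero[of x] norm_ge_zero[of h] norm_ge_zero[of g] by linarith
    have SqS: "S powr q = S powr (q-1) * S" using S by (simp add: powr_m1)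
    have main: "norm D \<le> K2 q * norm h * norm g * S powr (q-1)"
    proof (cases "norm x \<le> 2*(norm h + norm g)")
      case True
      define A where "A = 2*(1+q) * S powr q"
      have A0: "A \<ge> 0" using q by (simp add: A_def)
      have n1: "norm (x+h+g) \<le> S" "norm (x+h) \<le> S" "norm (x+g) \<le> S" "norm x \<le> S"
        unfolding S_def using norm_triangle_ineq[of x h] norm_triangle_ineq[of x g]
          norm_triangle_ineq[of "x+h" g] norm_ge_zero[of h] norm_ge_zero[of g] by linarith+
      have Dh: "norm D \<le> A * norm h"
      proof -
        have "D = (FF q (x+h+g) - FF q (x+g)) - (FF q (x+h) - FF q x)" by (simp add: D_def algebra_simps)
        then have "norm D \<le> norm (FF q (x+h+g) - FF q (x+g)) + norm (FF q (x+h) - FF q x)"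
          by (metis norm_triangle_ineq4)
        also have "\<dots> \<le> (1+q) * S powr q * norm h + (1+q) * S powr q * norm h"
          using fd[OF q n1(1) n1(3)] fd[OF q n1(2) n1(4)] by (intro add_mono) (simp_all add: algebra_simps)
        finally show ?thesis by (simp add: A_def algebra_simps)
      qed
      have Dg: "norm D \<le> A * norm g"
      proof -
        have "D = (FF q (x+h+g) - FF q (x+h)) - (FF q (x+g) - FF q x)" by (simp add: D_def algebra_simps)
        then have "norm D \<le> norm (FF q (x+h+g) - FF q (x+h)) + norm (FF q (x+g) - FF q x)"
          by (metis norm_triangle_ineq4)
        also have "\<dots> \<le> (1+q) * S powr q * norm g + (1+q) * S powr q * norm g"
          using fd[OF q n1(1) n1(2)] fd[OF q n1(3) n1(4)] by (intro add_mono) (simp_all add: algebra_simps)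
        finally show ?thesis by (simp add: A_def algebra_simps)
      qed
      have hg: "(norm h + norm g) * norm D \<le> 2 * (A * norm h * norm g)"
      proof (cases "norm h \<le> norm g")
        case True
        then have "(norm h + norm g) * norm D \<le> (2 * norm g) * norm D" by (intro mult_right_mono) auto
        also have "\<dots> \<le> (2 * norm g) * (A * norm h)" using Dh by (intro mult_left_mono) auto
        finally show ?thesis by (simp add: algebra_simps)
      next
        case False
        then have "(norm h + norm g) * norm D \<le> (2 * norm h) * norm D" by (intro mult_right_mono) auto
        also have "\<dots> \<le> (2 * norm h) * (A * norm g)" using Dg by (intro mult_left_mono) auto
        finally show ?thesis by (simp add: algebra_simps)
      qed
      have "S * norm D \<le> 3 * (norm h + norm g) * norm D"
        using True by (intro mult_right_mono) (auto simp: S_def)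
      also have "\<dots> \<le> 6 * (A * norm h * norm g)" using hg by linarith
      also have "\<dots> = S * (12*(1+q) * norm h * norm g * S powr (q-1))"
        by (simp add: A_def SqS algebra_simps)
      finally have "norm D \<le> 12*(1+q) * norm h * norm g * S powr (q-1)"
        using S by simp
      also have "\<dots> \<le> K2 q * norm h * norm g * S powr (q-1)"
        using K2(1) nn by (simp add: mult.assoc mult_right_mono)
      finally show ?thesis .
    next
      case False
      define K1 where "K1 = 2*q*\<bar>q/2-1\<bar> + 3*q"
      have K1: "K1 \<ge> 0" using q by (simp add: K1_def)
      have lo: "norm (x + a *\<^sub>R h + b *\<^sub>R g) > S/3" and hi: "norm (x + a *\<^sub>R h + b *\<^sub>R g) \<le> S"
        if "0 \<le> a" "a \<le> 1" "0 \<le> b" "b \<le> 1" for a b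
      proof -
        have "norm (a *\<^sub>R h) \<le> norm h" "norm (b *\<^sub>R g) \<le> norm g"
          using that by (auto intro: mult_left_le_one_le)
        moreover have "norm (x + a *\<^sub>R h + b *\<^sub>R g) \<ge> norm x - norm (a *\<^sub>R h) - norm (b *\<^sub>R g)"
          using norm_diff_ineq[of x "a *\<^sub>R h + b *\<^sub>R g"] norm_triangle_ineq[of "a *\<^sub>R h" "b *\<^sub>R g"]
          by (simp add: add.assoc)
        moreover have "norm (x + a *\<^sub>R h + b *\<^sub>R g) \<le> norm x + norm (a *\<^sub>R h) + norm (b *\<^sub>R g)"
          using norm_triangle_ineq[of x "a *\<^sub>R h + b *\<^sub>R g"] norm_triangle_ineq[of "a *\<^sub>R h" "b *\<^sub>R g"]
          by (simp add: add.assoc)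
        note facts = calculation this
        show "norm (x + a *\<^sub>R h + b *\<^sub>R g) > S/3"
          unfolding S_def by (rule lohi1[OF facts False norm_ge_zero norm_ge_zero])
        show "norm (x + a *\<^sub>R h + b *\<^sub>R g) \<le> S"
          unfolding S_def by (rule lohi2[OF facts False norm_ge_zero norm_ge_zero])
      qed
      have "norm (x + a *\<^sub>R h + b *\<^sub>R g) > 0" if "0 \<le> a" "a \<le> 1" "0 \<le> b" "b \<le> 1" for a b
        using lo[OF that] S by linarith
      from far_case[OF q this, where e=D]
      have "\<exists>a b. 0 \<le> a \<and> a \<le> 1 \<and> 0 \<le> b \<and> b \<le> 1 \<and>
        inner D D \<le> K1 * norm (x + a *\<^sub>R h + b *\<^sub>R g) powr (q-1) * norm h * norm g * norm D"
        unfolding D_def K1_def .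
      then obtain a b where ab: "0 \<le> a" "a \<le> 1" "0 \<le> b" "b \<le> 1"
        and bd: "inner D D \<le> K1 * norm (x + a *\<^sub>R h + b *\<^sub>R g) powr (q-1) * norm h * norm g * norm D"
        by blast
      define ny where "ny = norm (x + a *\<^sub>R h + b *\<^sub>R g)"
      have ny: "ny > S/3" "ny \<le> S" using lo[OF ab] hi[OF ab] by (simp_all add: ny_def)
      have pw: "ny powr (q-1) \<le> 3 * S powr (q-1)"
      proof (cases "q \<ge> 1")
        case True
        then have "ny powr (q-1) \<le> S powr (q-1)" using ny S by (intro powr_mono2) auto
        then show ?thesis using powr_ge_zero[of S "q-1"] by linarith
      next
        case False
        then have "ny powr (q-1) \<le> (S/3) powr (q-1)" using ny S by (intro powr_mono2') auto
        also have "\<dots> = S powr (q-1) * 3 powr (1-q)"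
        proof -
          have e: "3 powr (1-q) = 1 / 3 powr (q-1)" using powr_minus_divide[of 3 "q-1"] by simp
          show ?thesis using S unfolding e by (simp add: powr_divide)
        qed
        also have "\<dots> \<le> S powr (q-1) * 3"
        proof -
          have "3 powr (1-q) \<le> 3 powr 1" using q by (intro powr_mono) auto
          then show ?thesis by (intro mult_left_mono) auto
        qed
        finally show ?thesis by simp
      qed
      have "norm D * norm D \<le> (K1 * ny powr (q-1) * norm h * norm g) * norm D"
        using bd by (simp add: ny_def power2_norm_eq_inner[symmetric] power2_eq_square)
      then have "norm D \<le> K1 * ny powr (q-1) * norm h * norm g"
        by (cases "norm D = 0") (use K1 in \<open>auto simp: mult_le_cancel_right\<close>)
      also have "\<dots> \<le> K1 * (3 * S powr (q-1)) * norm h * norm g"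
        using pw K1 by (intro mult_right_mono mult_left_mono) auto
      also have "\<dots> = (3*K1) * norm h * norm g * S powr (q-1)" by (simp add: algebra_simps)
      also have "\<dots> \<le> K2 q * norm h * norm g * S powr (q-1)"
        using K2(2) nn by (simp add: K1_def mult.assoc mult_right_mono)
      finally show ?thesis .
    qed
    then show ?thesis by (simp add: D_def S_def)
  qed
qed



definition emb :: "nat \<Rightarrow> nat \<Rightarrow> mat \<Rightarrow> fv" where
  "emb N n A = Abs_fv (\<lambda>(i,j). if i < N \<and> j < n then A i j else 0)"

lemma vec_emb: "vec (emb N n A) = (\<lambda>(i,j). if i < N \<and> j < n then A i j else 0)"
  unfolding emb_def
proof (rule Abs_fv_inverse, simp)
  show "finite {k. (case k of (i, j) \<Rightarrow> if i < N \<and> j < n then A i j else 0) \<noteq> 0}"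
    by (rule finite_subset[of _ "{..<N} \<times> {..<n}"]) (auto split: if_splits)
qed

lemma norm_emb: "norm (emb N n A) = fnorm N n A"
proof -
  have s: "supp (emb N n A) \<subseteq> {..<N} \<times> {..<n}"
    by (auto simp: supp_def vec_emb split: if_splits)
  have "inner (emb N n A) (emb N n A) = (\<Sum>k\<in>{..<N} \<times> {..<n}. vec (emb N n A) k * vec (emb N n A) k)"
    by (rule inner_fv_alt) (use s in auto)
  also have "\<dots> = (\<Sum>(i,j)\<in>{..<N} \<times> {..<n}. (A i j)\<^sup>2)"
    by (rule sum.cong) (auto simp: vec_emb power2_eq_square)
  also have "\<dots> = (\<Sum>i<N. \<Sum>j<n. (A i j)\<^sup>2)"
    by (simp add: sum.cartesian_product)
  finally show ?thesis by (simp add: norm_eq_sqrt_inner fnorm_def)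
qed

lemma emb_add: "emb N n (madd A B) = emb N n A + emb N n B"
  by (simp add: fv_eq plus_fv.rep_eq vec_emb madd_def)

lemma emb_sub: "emb N n (msub A B) = emb N n A - emb N n B"
  by (simp add: fv_eq minus_fv.rep_eq vec_emb msub_def)

lemma emb_bfield: "emb N n (bfield p K N n X) = K *\<^sub>R FF (p-2) (emb N n X)"
  by (simp add: fv_eq scaleR_fv.rep_eq vec_emb bfield_def FF_def norm_emb)

lemma mmul_add: "mmul n (madd A B) C = madd (mmul n A C) (mmul n B C)"
  by (simp add: mmul_def madd_def fun_eq_iff distrib_right sum.distrib)

lemma mmul_sub: "mmul n (msub A B) C = msub (mmul n A C) (mmul n B C)"
  by (simp add: mmul_def msub_def fun_eq_iff left_diff_distrib sum_subtractf)

lemma fnorm_nonneg: "fnorm N n A \<ge> 0" by (simp add: fnorm_def sum_nonneg)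

lemma fnorm_mmul: "fnorm N n (mmul n A B) \<le> fnorm N n A * fnorm n n B"
proof -
  have "(\<Sum>i<N. \<Sum>j<n. (mmul n A B i j)\<^sup>2) \<le> (\<Sum>i<N. \<Sum>j<n. (\<Sum>k<n. (A i k)\<^sup>2) * (\<Sum>k<n. (B k j)\<^sup>2))"
    unfolding mmul_def by (intro sum_mono Cauchy_Schwarz_ineq_sum)
  also have "\<dots> = (\<Sum>i<N. \<Sum>k<n. (A i k)\<^sup>2) * (\<Sum>j<n. \<Sum>k<n. (B k j)\<^sup>2)"
    by (rule sum_product[symmetric])
  also have "(\<Sum>j<n. \<Sum>k<n. (B k j)\<^sup>2) = (\<Sum>k<n. \<Sum>j<n. (B k j)\<^sup>2)"
    by (rule sum.swap)
  finally have "sqrt (\<Sum>i<N. \<Sum>j<n. (mmul n A B i j)\<^sup>2) \<le> sqrt ((\<Sum>i<N. \<Sum>k<n. (A i k)\<^sup>2) * (\<Sum>k<n. \<Sum>j<n. (B k j)\<^sup>2))"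
    by (rule real_sqrt_le_mono)
  then show ?thesis by (simp add: fnorm_def real_sqrt_mult)
qed

lemma fnorm_cong: "(\<And>i j. i < N \<Longrightarrow> j < n \<Longrightarrow> A i j = B i j) \<Longrightarrow> fnorm N n A = fnorm N n B"
  unfolding fnorm_def by (intro arg_cong[where f=sqrt] sum.cong) auto

lemma mmul_inv:
  assumes "is_inverse n \<Psi> \<Phi>" "j < n"
  shows "mmul n (mmul n A \<Psi>) \<Phi> i j = A i j"
proof -
  have "mmul n (mmul n A \<Psi>) \<Phi> i j = (\<Sum>k<n. \<Sum>l<n. A i l * \<Psi> l k * \<Phi> k j)"
    by (simp add: mmul_def sum_distrib_right)
  also have "\<dots> = (\<Sum>l<n. A i l * mmul n \<Psi> \<Phi> l j)"
    by (subst sum.swap) (simp add: mmul_def sum_distrib_left mult.assoc)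
  also have "\<dots> = (\<Sum>l<n. A i l * (if l = j then 1 else 0))"
    using assms by (intro sum.cong) (auto simp: is_inverse_def)
  also have "\<dots> = A i j" using assms(2) by (simp add: if_distrib cong: if_cong)
  finally show ?thesis .
qed

lemma fnorm_lower:
  assumes "is_inverse n \<Psi> \<Phi>"
  shows "fnorm N n A \<le> fnorm N n (mmul n A \<Psi>) * fnorm n n \<Phi>"
proof -
  have "fnorm N n A = fnorm N n (mmul n (mmul n A \<Psi>) \<Phi>)"
    using mmul_inv[OF assms] by (intro fnorm_cong) auto
  also have "\<dots> \<le> fnorm N n (mmul n A \<Psi>) * fnorm n n \<Phi>" by (rule fnorm_mmul)
  finally show ?thesis .
qed



lemma K2_nonneg: "q \<ge> 0 \<Longrightarrow> K2 q \<ge> 0" by (simp add: K2_def)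

theorem lemma3p14:
  fixes p K :: real
  assumes "p \<ge> 2" and "K > 0"
  shows "\<exists>C :: real \<Rightarrow> real \<Rightarrow> real.
    \<forall>(N::nat) (n::nat) (\<Psi>::mat) (\<Phi>::mat) (\<xi>::mat) (\<xi>o::mat) (G::mat).
      is_inverse n \<Psi> \<Phi> \<longrightarrow>
      fnorm N n
        (msub (msub (bfield p K N n (mmul n \<xi> \<Psi>)) (bfield p K N n (mmul n \<xi>o \<Psi>)))
              (msub (bfield p K N n (mmul n (madd \<xi> G) \<Psi>))
                    (bfield p K N n (mmul n (madd \<xi>o G) \<Psi>))))
      \<le> C (fnorm n n \<Psi>) (fnorm n n \<Phi>) * fnorm N n G *
         ((fnorm N n \<xi>o)\<^sup>2 + (fnorm N n (msub \<xi> \<xi>o))\<^sup>2 + (fnorm N n G)\<^sup>2) powr ((p - 3) / 2) *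
         fnorm N n (msub \<xi> \<xi>o)"
proof -
  define q where "q = p - 2"
  have q: "q \<ge> 0" using assms by (simp add: q_def)
  define KK where "KK = K2 q"
  have KK: "KK \<ge> 0" using K2_nonneg[OF q] by (simp add: KK_def)
  define C where "C a b = K * KK * a\<^sup>2 * (if p \<ge> 3 then (3*a) powr (p-3) else b powr (3-p))" for a b :: real
  show ?thesis
  proof (rule exI[of _ C], intro allI impI)
    fix N n :: nat and \<Psi> \<Phi> \<xi> \<xi>o G :: mat
    assume inv: "is_inverse n \<Psi> \<Phi>"
    define a where "a = fnorm n n \<Psi>"
    define b where "b = fnorm n n \<Phi>"
    define X0 where "X0 = fnorm N n \<xi>o"
    define H where "H = fnorm N n (msub \<xi> \<xi>o)"
    define Gn where "Gn = fnorm N n G"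
    define W where "W = X0\<^sup>2 + H\<^sup>2 + Gn\<^sup>2"
    define T where "T = sqrt W"
    define x0 where "x0 = emb N n (mmul n \<xi>o \<Psi>)"
    define h where "h = emb N n (mmul n (msub \<xi> \<xi>o) \<Psi>)"
    define g where "g = emb N n (mmul n G \<Psi>)"
    define D where "D = FF q (x0+h+g) - FF q (x0+h) - FF q (x0+g) + FF q x0"
    define S where "S = norm x0 + norm h + norm g"
    have a0: "a \<ge> 0" "b \<ge> 0" by (simp_all add: a_def b_def fnorm_nonneg)
    have X0: "X0 \<ge> 0" "H \<ge> 0" "Gn \<ge> 0" by (simp_all add: X0_def H_def Gn_def fnorm_nonneg)
    have S0: "S \<ge> 0" by (simp add: S_def)
    have xi: "\<xi> = madd \<xi>o (msub \<xi> \<xi>o)" by (simp add: madd_def msub_def fun_eq_iff)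
    have e1: "emb N n (mmul n \<xi> \<Psi>) = x0 + h"
      by (subst xi) (simp add: mmul_add emb_add x0_def h_def)
    have e2: "emb N n (mmul n (madd \<xi> G) \<Psi>) = x0 + h + g"
      by (simp add: mmul_add emb_add e1 g_def)
    have e3: "emb N n (mmul n (madd \<xi>o G) \<Psi>) = x0 + g"
      by (simp add: mmul_add emb_add x0_def g_def)
    have LHS: "fnorm N n
        (msub (msub (bfield p K N n (mmul n \<xi> \<Psi>)) (bfield p K N n (mmul n \<xi>o \<Psi>)))
              (msub (bfield p K N n (mmul n (madd \<xi> G) \<Psi>))
                    (bfield p K N n (mmul n (madd \<xi>o G) \<Psi>)))) = K * norm D"
    proof -
      have "emb N n (msub (msub (bfield p K N n (mmul n \<xi> \<Psi>)) (bfield p K N n (mmul n \<xi>o \<Psi>)))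
              (msub (bfield p K N n (mmul n (madd \<xi> G) \<Psi>))
                    (bfield p K N n (mmul n (madd \<xi>o G) \<Psi>)))) = - (K *\<^sub>R D)"
        by (simp add: emb_sub emb_bfield e1 e2 e3 x0_def[symmetric] D_def q_def algebra_simps)
      then show ?thesis using assms(2) by (metis norm_emb norm_minus_cancel norm_scaleR abs_of_pos)
    qed
    have nh: "norm h \<le> a * H" unfolding h_def norm_emb a_def H_def
      by (metis fnorm_mmul mult.commute)
    have ng: "norm g \<le> a * Gn" unfolding g_def norm_emb a_def Gn_def
      by (metis fnorm_mmul mult.commute)
    have nx: "norm x0 \<le> a * X0" unfolding x0_def norm_emb a_def X0_def
      by (metis fnorm_mmul mult.commute)
    have lx: "X0 \<le> norm x0 * b" unfolding x0_def norm_emb b_def X0_def by (rule fnorm_lower[OF inv])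
    have lh: "H \<le> norm h * b" unfolding h_def norm_emb b_def H_def by (rule fnorm_lower[OF inv])
    have lg: "Gn \<le> norm g * b" unfolding g_def norm_emb b_def Gn_def by (rule fnorm_lower[OF inv])
    have SD: "norm D \<le> KK * norm h * norm g * S powr (p-3)"
      using second_diff[OF q, of x0 h g] by (simp add: D_def S_def KK_def q_def)
    have step1: "K * norm D \<le> K * KK * (a*H) * (a*Gn) * S powr (p-3)"
    proof -
      have "KK * norm h * norm g * S powr (p-3) \<le> KK * (a*H) * (a*Gn) * S powr (p-3)"
        using KK nh ng a0 X0 by (intro mult_right_mono mult_mono) auto
      with SD have "norm D \<le> KK * (a*H) * (a*Gn) * S powr (p-3)" by linarith
      then show ?thesis using assms(2) by (simp add: mult.assoc)
    qed
    have RHS0: "0 \<le> C a b * Gn * W powr ((p - 3) / 2) * H"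
      using KK assms(2) a0 X0 by (simp add: C_def)
    show "fnorm N n
        (msub (msub (bfield p K N n (mmul n \<xi> \<Psi>)) (bfield p K N n (mmul n \<xi>o \<Psi>)))
              (msub (bfield p K N n (mmul n (madd \<xi> G) \<Psi>))
                    (bfield p K N n (mmul n (madd \<xi>o G) \<Psi>))))
      \<le> C (fnorm n n \<Psi>) (fnorm n n \<Phi>) * fnorm N n G *
         ((fnorm N n \<xi>o)\<^sup>2 + (fnorm N n (msub \<xi> \<xi>o))\<^sup>2 + (fnorm N n G)\<^sup>2) powr ((p - 3) / 2) *
         fnorm N n (msub \<xi> \<xi>o)"
    proof (cases "H = 0")
      case True
      then have "K * norm D \<le> 0" using step1 by simp
      then show ?thesis unfolding LHS using RHS0
        by (simp add: a_def b_def Gn_def W_def X0_def H_def)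
    next
      case False
      then have Hp: "H > 0" using X0 by simp
      have TW: "T\<^sup>2 = W" by (simp add: T_def W_def)
      have HT: "H \<le> T" unfolding T_def W_def
        by (rule real_le_rsqrt) (simp add: add_nonneg_nonneg)
      have Tp: "T > 0" using Hp HT by linarith
      have WT: "W powr ((p-3)/2) = T powr (p-3)"
      proof -
        have e: "2*((p-3)/2) = p-3" by simp
        have "W powr ((p-3)/2) = T powr (2*((p-3)/2))" unfolding TW[symmetric] by (rule pow2_powr[OF Tp])
        then show ?thesis unfolding e .
      qed
      have X0T: "X0 \<le> T" "Gn \<le> T" unfolding T_def W_def
        by (rule real_le_rsqrt, simp add: add_nonneg_nonneg)+
      have Tsum: "T \<le> X0 + H + Gn"
      proof -
        have "W \<le> (X0 + H + Gn)\<^sup>2" using X0 by (simp add: W_def power2_eq_square algebra_simps)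
        then show ?thesis unfolding T_def using X0 by (simp add: real_sqrt_le_iff real_le_lsqrt)
      qed
      define M where "M = (if p \<ge> 3 then (3*a) powr (p-3) else b powr (3-p))"
      have SM: "S powr (p-3) \<le> M * T powr (p-3)"
      proof (cases "p \<ge> 3")
        case True
        have "S \<le> a * X0 + a * H + a * Gn" using nx nh ng by (simp add: S_def)
        also have "\<dots> \<le> a * T + a * T + a * T"
          using X0T HT a0 by (intro add_mono mult_left_mono) auto
        also have "\<dots> = (3*a) * T" by simp
        finally have "S powr (p-3) \<le> ((3*a) * T) powr (p-3)" using S0 True by (intro powr_mono2) auto
        also have "\<dots> = (3*a) powr (p-3) * T powr (p-3)" using a0 Tp by (simp add: powr_mult)
        finally show ?thesis using True by (simp add: M_def)
      next
        case False
        have "T \<le> b * S" using Tsum lx lh lg by (simp add: S_def algebra_simps)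
        then have bS: "b > 0" "S > 0" using Tp a0 S0
          by (metis mult_eq_0_iff order.not_eq_order_implies_strict not_le)+
        have "T / b \<le> S" using \<open>T \<le> b * S\<close> bS by (simp add: divide_le_eq mult.commute)
        then have "S powr (p-3) \<le> (T / b) powr (p-3)" using False Tp bS by (intro powr_mono2') auto
        also have "\<dots> = b powr (3-p) * T powr (p-3)"
        proof -
          have d1: "(T/b) powr (p-3) = T powr (p-3) / b powr (p-3)" using Tp bS by (simp add: powr_divide)
          have d2: "b powr (3-p) = 1 / b powr (p-3)" using powr_minus_divide[of b "p-3"] by simp
          show ?thesis unfolding d1 d2 by simp
        qed
        finally show ?thesis using False by (simp add: M_def)
      qed
      have "K * norm D \<le> K * KK * (a*H) * (a*Gn) * (M * T powr (p-3))"
        using step1 SM KK assms(2) a0 X0 by (smt (verit) mult_left_mono mult_nonneg_nonneg)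
      also have "\<dots> = C a b * Gn * W powr ((p - 3) / 2) * H"
        by (simp add: C_def M_def WT power2_eq_square algebra_simps)
      finally show ?thesis unfolding LHS by (simp add: a_def b_def Gn_def W_def X0_def H_def)
    qed
  qed
qed

end
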